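(* The Julia set $J(\mathcal{G})$ of the word semigroup $\mathcal{G}$ contains a neighbourhood of $0$.
   Context: For $x,y\in PSL(2,\mathbb{C})$, $\gamma(x,y)=\operatorname{tr}[x,y]-2$. A good word is a reduced word $w=a^{m_1}ba^{m_2}b\cdots ba^{m_n}$ in $\langle a,b\mid b^2=1\rangle$ with $n\ge3$ and $m_i\ne0$ for $2\le i\le n-1$; its word polynomial $p_w\in\mathbb{Z}[z]$ is the unique polynomial such that for every parabolic $f$ and every order-two elliptic $\phi$ in $PSL(2,\mathbb{C})$, $\gamma(f,w(f,\phi))=p_w(\gamma(f,\phi))$, where $w(f,\phi)$ substitutes $a=f$, $b=\phi$. The word semigroup is $\mathcal{G}=\{p_w: w \text{ a good word}\}$ (a semigroup under composition). Its Fatou set $F(\mathcal{G})$ is the set of $z\in\mathbb{C}$ having a neighbourhood $U$ on which the family $\{p|_U:p\in\mathcal{G}\}$ is normal, and $J(\mathcal{G})=\mathbb{C}\setminus F(\mathcal{G})$. *)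

theory Defs
  imports "HOL-Analysis.Analysis" "HOL-Computational_Algebra.Polynomial"
begin

type_synonym cmat = "complex^2^2"

text \<open>Elements of PSL(2,C) are represented by their lifts to SL(2,C);
  all quantities below are independent of the choice of lift.\<close>

definition SL2 :: "cmat \<Rightarrow> bool" where
  "SL2 A \<longleftrightarrow> det A = 1"

definition mpow :: "cmat \<Rightarrow> nat \<Rightarrow> cmat" where
  "mpow A n = ((\<lambda>B. A ** B) ^^ n) (mat 1)"

definition zpow :: "cmat \<Rightarrow> int \<Rightarrow> cmat" where
  "zpow A m = (if 0 \<le> m then mpow A (nat m) else mpow (matrix_inv A) (nat (- m)))"

definition gamma :: "cmat \<Rightarrow> cmat \<Rightarrow> complex" where
  "gamma x y = trace (x ** y ** matrix_inv x ** matrix_inv y) - 2"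

definition parabolic :: "cmat \<Rightarrow> bool" where
  "parabolic A \<longleftrightarrow> SL2 A \<and> (trace A)\<^sup>2 = 4 \<and> A \<noteq> mat 1 \<and> A \<noteq> - mat 1"

definition elliptic2 :: "cmat \<Rightarrow> bool" where
  "elliptic2 A \<longleftrightarrow> SL2 A \<and> trace A = 0"

text \<open>The word a^(m1) b a^(m2) b ... b a^(mn) is encoded by the list [m1,...,mn].\<close>
fun word_eval :: "cmat \<Rightarrow> cmat \<Rightarrow> int list \<Rightarrow> cmat" where
  "word_eval f phi [] = mat 1"
| "word_eval f phi [m] = zpow f m"
| "word_eval f phi (m # m' # ms) = zpow f m ** phi ** word_eval f phi (m' # ms)"

definition good_word :: "int list \<Rightarrow> bool" where
  "good_word ms \<longleftrightarrow> 3 \<le> length ms \<and> (\<forall>i. 1 \<le> i \<and> i < length ms - 1 \<longrightarrow> ms ! i \<noteq> 0)"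

definition word_poly :: "int list \<Rightarrow> complex poly" where
  "word_poly ms = (THE p. \<forall>f phi. parabolic f \<and> elliptic2 phi \<longrightarrow>
      gamma f (word_eval f phi ms) = poly p (gamma f phi))"

definition word_semigroup :: "(complex \<Rightarrow> complex) set" where
  "word_semigroup = {poly (word_poly ms) | ms. good_word ms}"

text \<open>Normality on U (with respect to the spherical metric): every sequence has a
  subsequence converging locally uniformly on U either to a function or to \<infinity>.\<close>
definition normal_family :: "(complex \<Rightarrow> complex) set \<Rightarrow> complex set \<Rightarrow> bool" where
  "normal_family F U \<longleftrightarrow>
    (\<forall>g :: nat \<Rightarrow> complex \<Rightarrow> complex. (\<forall>n. g n \<in> F) \<longrightarrow>
      (\<exists>r. strict_mono r \<and>
        ((\<exists>h. \<forall>K. compact K \<and> K \<subseteq> U \<longrightarrow> uniform_limit K (\<lambda>n. g (r n)) h sequentially) \<or>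
         (\<forall>K. compact K \<and> K \<subseteq> U \<longrightarrow>
            (\<forall>M::real. eventually (\<lambda>n. \<forall>z\<in>K. M \<le> norm (g (r n) z)) sequentially)))))"

definition fatou_set :: "(complex \<Rightarrow> complex) set \<Rightarrow> complex set" where
  "fatou_set F = {z. \<exists>U. open U \<and> z \<in> U \<and> normal_family F U}"

definition julia_set :: "(complex \<Rightarrow> complex) set \<Rightarrow> complex set" where
  "julia_set F = UNIV - fatou_set F"

end

theory Submission
  imports Defs
begin


definition mk :: "complex \<Rightarrow> complex \<Rightarrow> complex \<Rightarrow> complex \<Rightarrow> cmat" where
  "mk a b c d = vector [vector [a,b], vector [c,d]]"

lemma mk_nth[simp]: "mk a b c d $ 1 $ 1 = a" "mk a b c d $ 1 $ 2 = b" "mk a b c d $ 2 $ 1 = c" "mk a b c d $ 2 $ 2 = d"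
  by (simp_all add: mk_def vector_1 vector_2)

lemma cmat_eq_iff: "(A::cmat) = B \<longleftrightarrow> A$1$1 = B$1$1 \<and> A$1$2 = B$1$2 \<and> A$2$1 = B$2$1 \<and> A$2$2 = B$2$2"
  by (auto simp: vec_eq_iff forall_2)

lemma mk_eta: "(A::cmat) = mk (A$1$1) (A$1$2) (A$2$1) (A$2$2)"
  by (simp add: cmat_eq_iff)

lemma mult_mk: "mk a b c d ** mk a' b' c' d' = mk (a*a'+b*c') (a*b'+b*d') (c*a'+d*c') (c*b'+d*d')"
  by (simp add: cmat_eq_iff matrix_matrix_mult_def sum_2)

lemma mat_mk: "(mat k :: cmat) = mk k 0 0 k"
  by (simp add: cmat_eq_iff mat_def)



lemma matrix_inv_eq: assumes "(A::cmat) ** B = mat 1" "B ** A = mat 1" shows "matrix_inv A = B"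
proof -
  have "\<exists>A'. A ** A' = mat 1 \<and> A' ** A = mat 1" using assms by blast
  then have h: "A ** matrix_inv A = mat 1 \<and> matrix_inv A ** A = mat 1"
    unfolding matrix_inv_def by (rule someI_ex)
  have "matrix_inv A = matrix_inv A ** (A ** B)" using assms by simp
  also have "\<dots> = B" using h by (simp add: matrix_mul_assoc)
  finally show ?thesis .
qed

lemma det_mk: "det (mk a b c d) = a*d - b*c" by (simp add: det_2)
lemma trace_mk: "trace (mk a b c d) = a + d" by (simp add: trace_def sum_2)

lemma inv_mk: "a*d - b*c = 1 \<Longrightarrow> matrix_inv (mk a b c d) = mk d (-b) (-c) a"
  by (rule matrix_inv_eq) (simp_all add: mult_mk mat_mk algebra_simps)

lemma mpow_Suc: "mpow A (Suc k) = A ** mpow A k"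
  by (simp add: mpow_def)
lemma mpow_0: "mpow A 0 = mat 1"
  by (simp add: mpow_def)

lemma mpow_step:
  assumes "n^2 + q*r = 0"
  shows "mk (e*(1+n)) (e*q) (e*r) (e*(1-n)) ** mk (E*(1 + k * n)) (E*(k*q)) (E*(k*r)) (E*(1 - k * n))
     = mk (e*E*(1 + (1+k) * n)) (e*E*((1+k)*q)) (e*E*((1+k)*r)) (e*E*(1 - (1+k) * n))"
  unfolding mult_mk cmat_eq_iff mk_nth by (intro conjI; insert assms; (algebra | simp add: algebra_simps))

lemma mpow_par:
  assumes "n^2 + q*r = 0" "e^2 = 1"
  shows "mpow (mk (e*(1+n)) (e*q) (e*r) (e*(1-n))) k
       = mk (e^k*(1 + of_nat k * n)) (e^k*(of_nat k*q)) (e^k*(of_nat k*r)) (e^k*(1 - of_nat k * n))"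
proof (induction k)
  case 0 then show ?case by (simp add: mpow_0 mat_mk)
next
  case (Suc k)
  show ?case unfolding mpow_Suc Suc mpow_step[OF assms(1)] by (simp add: power_Suc of_nat_Suc)
qed

lemma uminus_mk: "- mk a b c d = mk (-a) (-b) (-c) (-d)"
  by (simp add: cmat_eq_iff)

lemma parabolic_form:
  assumes "parabolic f"
  obtains e n q r where "e^2 = 1" "n^2 + q*r = 0" "f = mk (e*(1+n)) (e*q) (e*r) (e*(1-n))"
proof -
  define e where "e = trace f / 2"
  have tr: "f$1$1 + f$2$2 = 2*e" using assms unfolding e_def
    by (simp add: trace_def sum_2)
  have det: "f$1$1 * f$2$2 - f$1$2 * f$2$1 = 1" using assms by (simp add: parabolic_def SL2_def det_2)
  have e2: "e^2 = 1" using assms unfolding e_def parabolic_def by (simp add: power_divide)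
  define n where "n = e * f$1$1 - 1"
  define q where "q = e * f$1$2"
  define r where "r = e * f$2$1"
  have "f = mk (e*(1+n)) (e*q) (e*r) (e*(1-n))"
    unfolding cmat_eq_iff mk_nth n_def q_def r_def
    by (intro conjI; insert e2 tr; (algebra | simp add: algebra_simps))
  moreover have "n^2 + q*r = 0"
    unfolding n_def q_def r_def by (insert e2 tr det; algebra)
  ultimately show ?thesis using e2 that by blast
qed

lemma inv_par:
  assumes "n^2 + q*r = 0" "e^2 = 1"
  shows "matrix_inv (mk (e*(1+n)) (e*q) (e*r) (e*(1-n))) = mk (e*(1+(-n))) (e*(-q)) (e*(-r)) (e*(1-(-n)))"
proof -
  have "e*(1+n) * (e*(1-n)) - e*q*(e*r) = 1" using assms by algebra
  then show ?thesis by (simp add: inv_mk)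
qed

lemma zpow_par:
  assumes "n^2 + q*r = 0" "e^2 = 1"
  shows "zpow (mk (e*(1+n)) (e*q) (e*r) (e*(1-n))) m
       = mk (e^nat\<bar>m\<bar>*(1 + of_int m * n)) (e^nat\<bar>m\<bar>*(of_int m*q)) (e^nat\<bar>m\<bar>*(of_int m*r)) (e^nat\<bar>m\<bar>*(1 - of_int m * n))"
proof (cases "0 \<le> m")
  case True
  then have "of_nat (nat m) = (of_int m :: complex)" by simp
  then show ?thesis using True mpow_par[OF assms, of "nat m"] by (simp add: zpow_def)
next
  case False
  have h: "(-n)^2 + (-q)*(-r) = 0" using assms(1) by simp
  have "of_nat (nat (-m)) = - (of_int m :: complex)" using False by simp
  then show ?thesis using False mpow_par[OF h assms(2), of "nat (-m)"] inv_par[OF assms]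
    by (simp add: zpow_def)
qed

lemma key_entry2:
  fixes n q r e s \<sigma> a b c d x :: complex
  assumes "n^2 + q*r = 0" "e^2 = 1" "s^2 = 1" "\<sigma>^2 = 1" "a*d - b*c = 1"
  shows "trace (mk (e*(1+n)) (e*q) (e*r) (e*(1-n)) ** (mk a b c d ** mk (s*(1+x*n)) (s*(x*q)) (s*(x*r)) (s*(1-x*n)) ** mk (\<sigma>*d) (-(\<sigma>*b)) (-(\<sigma>*c)) (\<sigma>*a))
      ** mk (e*(1-n)) (-(e*q)) (-(e*r)) (e*(1+n)) ** (mk a b c d ** mk (s*(1-x*n)) (-(s*(x*q))) (-(s*(x*r))) (s*(1+x*n)) ** mk (\<sigma>*d) (-(\<sigma>*b)) (-(\<sigma>*c)) (\<sigma>*a))) - 2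
    = x^2 * (trace (mk (e*(1+n)) (e*q) (e*r) (e*(1-n)) ** mk a b c d ** mk (e*(1-n)) (-(e*q)) (-(e*r)) (e*(1+n)) ** mk d (-b) (-c) a) - 2)^2"
  using assms unfolding mult_mk trace_mk by algebra


lemma mat_comm: "(A::cmat) ** mat k = mat k ** A"
  by (simp add: cmat_eq_iff matrix_matrix_mult_def sum_2 mat_def mult.commute)

lemma mat_mat: "(mat k::cmat) ** mat l = mat (k*l)"
  by (simp add: mat_mk mult_mk)

lemma Z_inv:
  fixes n q r s x :: complex
  assumes "n^2 + q*r = 0" "s^2 = 1"
  shows "mk (s*(1+x*n)) (s*(x*q)) (s*(x*r)) (s*(1-x*n)) ** mk (s*(1-x*n)) (-(s*(x*q))) (-(s*(x*r))) (s*(1+x*n)) = mat 1"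
        "mk (s*(1-x*n)) (-(s*(x*q))) (-(s*(x*r))) (s*(1+x*n)) ** mk (s*(1+x*n)) (s*(x*q)) (s*(x*r)) (s*(1-x*n)) = mat 1"
  unfolding mult_mk mat_mk cmat_eq_iff mk_nth
  by (intro conjI; insert assms; (algebra | simp add: algebra_simps))+

lemma conj_inv:
  assumes "(V::cmat) ** U = mat \<sigma>" "U ** V = mat \<sigma>" "\<sigma>^2 = 1" "Z ** Zi = mat 1"
  shows "(U ** Z ** V) ** (U ** Zi ** V) = mat 1"
proof -
  have "(U ** Z ** V) ** (U ** Zi ** V) = U ** Z ** (V ** U) ** Zi ** V" by (simp add: matrix_mul_assoc)
  also have "\<dots> = U ** Z ** (mat \<sigma> ** Zi) ** V" by (simp add: assms(1) matrix_mul_assoc)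
  also have "\<dots> = U ** Z ** (Zi ** mat \<sigma>) ** V" by (simp add: mat_comm)
  also have "\<dots> = U ** (Z ** Zi) ** (mat \<sigma> ** V)" by (simp add: matrix_mul_assoc)
  also have "\<dots> = (U ** V) ** mat \<sigma>" by (simp add: assms(4) mat_comm matrix_mul_assoc)
  also have "\<dots> = mat 1" using assms(2,3) by (simp add: mat_mat power2_eq_square)
  finally show ?thesis .
qed

lemma gamma_conj:
  assumes "parabolic f" "det U = 1" "\<sigma>^2 = 1" "U ** V = mat \<sigma>"
  shows "gamma f (U ** zpow f x ** V) = of_int x ^ 2 * (gamma f U)^2"
proof -
  obtain e n q r where e2: "e^2 = 1" and nq: "n^2 + q*r = 0" and f: "f = mk (e*(1+n)) (e*q) (e*r) (e*(1-n))"
    using parabolic_form[OF assms(1)] by blast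
  obtain a b c d where U: "U = mk a b c d" using mk_eta by blast
  have dU: "a*d - b*c = 1" using assms(2) U by (simp add: det_mk)
  have "mk d (-b) (-c) a ** U = mat 1" using U dU by (simp add: mult_mk mat_mk algebra_simps)
  then have "V = mk d (-b) (-c) a ** (U ** V)" by (simp add: matrix_mul_assoc)
  also have "\<dots> = mk (\<sigma>*d) (-(\<sigma>*b)) (-(\<sigma>*c)) (\<sigma>*a)" using assms(4)
    by (simp add: mult_mk mat_mk algebra_simps)
  finally have V: "V = mk (\<sigma>*d) (-(\<sigma>*b)) (-(\<sigma>*c)) (\<sigma>*a)" .
  define s where "s = e^nat\<bar>x\<bar>"
  have s2: "s^2 = 1" proof -
    have "s^2 = (e^2)^nat\<bar>x\<bar>" unfolding s_def by (metis power_mult mult.commute)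
    then show ?thesis using e2 by simp
  qed
  have Z: "zpow f x = mk (s*(1 + of_int x*n)) (s*(of_int x*q)) (s*(of_int x*r)) (s*(1 - of_int x*n))"
    unfolding f s_def by (rule zpow_par[OF nq e2])
  have fi: "matrix_inv f = mk (e*(1-n)) (-(e*q)) (-(e*r)) (e*(1+n))"
    unfolding f using inv_par[OF nq e2] by simp
  have Ui: "matrix_inv U = mk d (-b) (-c) a" unfolding U using dU by (rule inv_mk)
  have Gi: "matrix_inv (U ** zpow f x ** V) = mk a b c d ** mk (s*(1 - of_int x*n)) (-(s*(of_int x*q))) (-(s*(of_int x*r))) (s*(1 + of_int x*n)) ** mk (\<sigma>*d) (-(\<sigma>*b)) (-(\<sigma>*c)) (\<sigma>*a)"
    unfolding Z[symmetric] V[symmetric] U[symmetric]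
  proof (rule matrix_inv_eq; rule conj_inv[OF _ assms(4) assms(3)])
    show "V ** U = mat \<sigma>" unfolding U V using dU by (simp add: mult_mk mat_mk algebra_simps)
    show "V ** U = mat \<sigma>" unfolding U V using dU by (simp add: mult_mk mat_mk algebra_simps)
    show "zpow f x ** mk (s*(1 - of_int x*n)) (-(s*(of_int x*q))) (-(s*(of_int x*r))) (s*(1 + of_int x*n)) = mat 1"
      unfolding Z by (rule Z_inv[OF nq s2])
    show "mk (s*(1 - of_int x*n)) (-(s*(of_int x*q))) (-(s*(of_int x*r))) (s*(1 + of_int x*n)) ** zpow f x = mat 1"
      unfolding Z by (rule Z_inv[OF nq s2])
  qed
  show ?thesis
    unfolding gamma_def Gi fi Ui
    unfolding Z unfolding U V f
    by (rule key_entry2[OF nq e2 s2 assms(3) dU])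
qed



lemma zpow_0[simp]: "zpow f 0 = mat 1" by (simp add: zpow_def mpow_def)

lemma we_cons: "ys \<noteq> [] \<Longrightarrow> word_eval f phi (m # ys) = zpow f m ** phi ** word_eval f phi ys"
  by (cases ys) auto

lemma we_append: "xs \<noteq> [] \<Longrightarrow> ys \<noteq> [] \<Longrightarrow>
   word_eval f phi (xs @ ys) = word_eval f phi xs ** phi ** word_eval f phi ys"
proof (induction xs)
  case Nil then show ?case by simp
next
  case (Cons m xs) then show ?case
    by (cases xs) (simp_all add: we_cons matrix_mul_assoc)
qed

lemma we_snoc: "xs \<noteq> [] \<Longrightarrow> word_eval f phi (xs @ [m]) = word_eval f phi xs ** phi ** zpow f m"
  using we_append[of xs "[m]"] by simp

lemma we_rev:
  assumes zz: "\<And>m. zpow f m ** zpow f (-m) = mat 1" and pp: "phi ** phi = mat (-1)"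
  shows "ms \<noteq> [] \<Longrightarrow> \<exists>\<sigma>. \<sigma>^2 = 1 \<and> word_eval f phi ms ** word_eval f phi (map uminus (rev ms)) = mat \<sigma>"
proof (induction ms)
  case Nil then show ?case by simp
next
  case (Cons m ms0)
  show ?case
  proof (cases ms0)
    case Nil then show ?thesis using zz by (intro exI[of _ 1]) simp
  next
    case (Cons m' ms)
    note IH = Cons.IH[unfolded Cons]
  let ?E = "word_eval f phi (m' # ms)"
  let ?E' = "word_eval f phi (map uminus (rev (m' # ms)))"
  obtain \<sigma> where s: "\<sigma>^2 = 1" "?E ** ?E' = mat \<sigma>" using IH by auto
  have r: "map uminus (rev (m # m' # ms)) = map uminus (rev (m' # ms)) @ [-m]" by simp
  have "word_eval f phi (m # m' # ms) ** word_eval f phi (map uminus (rev (m # m' # ms)))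
      = (zpow f m ** phi ** ?E) ** (?E' ** phi ** zpow f (-m))"
    unfolding r by (subst we_snoc) simp_all
  also have "\<dots> = zpow f m ** phi ** (?E ** ?E') ** phi ** zpow f (-m)"
    by (simp add: matrix_mul_assoc)
  also have "\<dots> = zpow f m ** phi ** mat \<sigma> ** phi ** zpow f (-m)" by (simp only: s(2))
  also have "\<dots> = zpow f m ** (phi ** mat \<sigma>) ** phi ** zpow f (-m)" by (simp only: matrix_mul_assoc)
  also have "\<dots> = zpow f m ** (mat \<sigma> ** phi) ** phi ** zpow f (-m)" by (simp only: mat_comm)
  also have "\<dots> = (zpow f m ** mat \<sigma>) ** (phi ** phi) ** zpow f (-m)" by (simp only: matrix_mul_assoc)
  also have "\<dots> = (mat \<sigma> ** zpow f m) ** mat (-1) ** zpow f (-m)" by (simp only: mat_comm pp)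
  also have "\<dots> = mat \<sigma> ** (zpow f m ** mat (-1)) ** zpow f (-m)" by (simp only: matrix_mul_assoc)
  also have "\<dots> = mat \<sigma> ** (mat (-1) ** zpow f m) ** zpow f (-m)" by (simp only: mat_comm)
  also have "\<dots> = (mat \<sigma> ** mat (-1)) ** (zpow f m ** zpow f (-m))" by (simp only: matrix_mul_assoc)
  also have "\<dots> = mat (-\<sigma>)" by (simp add: zz mat_mat)
  finally show ?thesis using s(1) unfolding Cons by (intro exI[of _ "-\<sigma>"]) simp
  qed
qed



fun mid :: "int list \<Rightarrow> int list" where
  "mid [] = []"
| "mid (x # xs) = mid xs @ [x] @ map uminus (rev (mid xs))"

fun Pw :: "int list \<Rightarrow> complex poly" where
  "Pw [] = [:0, 1:]"
| "Pw (x # xs) = smult (of_int x ^ 2) (Pw xs ^ 2)"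

lemma poly_Pw_Cons: "poly (Pw (x # xs)) z = of_int x ^ 2 * (poly (Pw xs) z)^2"
  by simp

lemma we_decomp:
  "word_eval f phi (0 # mid (x # xs) @ [0]) =
   word_eval f phi (0 # mid xs @ [0]) ** zpow f x ** word_eval f phi (map uminus (rev (0 # mid xs @ [0])))"
proof -
  let ?w = "mid xs"
  let ?B = "map uminus (rev ?w) @ [0]"
  have l: "0 # mid (x # xs) @ [0] = (0 # ?w) @ (x # ?B)" by simp
  have U: "word_eval f phi (0 # ?w @ [0]) = word_eval f phi (0 # ?w) ** phi"
    using we_snoc[of "0 # ?w" f phi 0] by simp
  have V: "word_eval f phi (map uminus (rev (0 # ?w @ [0]))) = phi ** word_eval f phi ?B"
  proof -
    have "map uminus (rev (0 # ?w @ [0])) = 0 # ?B" by simp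
    then show ?thesis using we_cons[of ?B f phi 0] by simp
  qed
  show ?thesis unfolding l U V
    by (simp add: we_append we_cons matrix_mul_assoc del: append_Cons)
qed

lemma parabolic_zz: "parabolic f \<Longrightarrow> zpow f m ** zpow f (-m) = mat 1"
proof -
  assume "parabolic f"
  then obtain e n q r where e2: "e^2 = 1" and nq: "n^2 + q*r = 0" and f: "f = mk (e*(1+n)) (e*q) (e*r) (e*(1-n))"
    using parabolic_form by blast
  define s where "s = e^nat\<bar>m\<bar>"
  have s2: "s^2 = 1"
  proof -
    have "s^2 = (e^2)^nat\<bar>m\<bar>" unfolding s_def by (metis power_mult mult.commute)
    then show ?thesis using e2 by simp
  qed
  have "zpow f m ** zpow f (-m) = mk (s*(1 + of_int m*n)) (s*(of_int m*q)) (s*(of_int m*r)) (s*(1 - of_int m*n))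
     ** mk (s*(1 - of_int m*n)) (-(s*(of_int m*q))) (-(s*(of_int m*r))) (s*(1 + of_int m*n))"
    unfolding f zpow_par[OF nq e2] s_def by simp
  then show ?thesis using Z_inv(1)[OF nq s2] by simp
qed

lemma parabolic_det_zpow: "parabolic f \<Longrightarrow> det (zpow f m) = 1"
proof -
  assume "parabolic f"
  then obtain e n q r where e2: "e^2 = 1" and nq: "n^2 + q*r = 0" and f: "f = mk (e*(1+n)) (e*q) (e*r) (e*(1-n))"
    using parabolic_form by blast
  define s where "s = e^nat\<bar>m\<bar>"
  have s2: "s^2 = 1"
  proof -
    have "s^2 = (e^2)^nat\<bar>m\<bar>" unfolding s_def by (metis power_mult mult.commute)
    then show ?thesis using e2 by simp
  qed
  have "det (zpow f m) = (s*(1 + of_int m*n)) * (s*(1 - of_int m*n)) - (s*(of_int m*q)) * (s*(of_int m*r))"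
    unfolding f zpow_par[OF nq e2] s_def det_mk by simp
  also have "\<dots> = 1" using nq s2 by algebra
  finally show ?thesis .
qed

lemma elliptic_sq: "elliptic2 phi \<Longrightarrow> phi ** phi = mat (-1)"
proof -
  assume h: "elliptic2 phi"
  obtain a b c d where p: "phi = mk a b c d" using mk_eta by blast
  have "a + d = 0" "a*d - b*c = 1" using h p by (auto simp: elliptic2_def SL2_def det_mk trace_mk)
  then show ?thesis unfolding p mult_mk mat_mk cmat_eq_iff mk_nth
    by (intro conjI; (algebra | simp add: algebra_simps))
qed

lemma det_we: "parabolic f \<Longrightarrow> det phi = 1 \<Longrightarrow> det (word_eval f phi ms) = 1"
  by (induction f phi ms rule: word_eval.induct) (auto simp: det_mul parabolic_det_zpow det_I)

lemma inv_main:
  assumes "parabolic f" "elliptic2 phi"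
  shows "gamma f (word_eval f phi (0 # mid xs @ [0])) = poly (Pw xs) (gamma f phi)"
proof (induction xs)
  case Nil then show ?case by simp
next
  case (Cons x xs)
  let ?U = "word_eval f phi (0 # mid xs @ [0])"
  let ?V = "word_eval f phi (map uminus (rev (0 # mid xs @ [0])))"
  obtain \<sigma> where s: "\<sigma>^2 = 1" "?U ** ?V = mat \<sigma>"
    using we_rev[OF parabolic_zz[OF assms(1)] elliptic_sq[OF assms(2)], of "0 # mid xs @ [0]"] by auto
  have dU: "det ?U = 1" using det_we assms by (auto simp: elliptic2_def SL2_def)
  show ?case unfolding we_decomp gamma_conj[OF assms(1) dU s] poly_Pw_Cons Cons ..
qed



lemma witness: "\<exists>f phi. parabolic f \<and> elliptic2 phi \<and> gamma f phi = z"
proof -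
  define s where "s = csqrt z"
  have s2: "s^2 = z" unfolding s_def by simp
  let ?f = "mk 1 1 0 1" and ?p = "mk \<i> 0 s (-\<i>)"
  have "parabolic ?f"
    by (simp add: parabolic_def SL2_def det_mk trace_mk mat_mk uminus_mk cmat_eq_iff)
  moreover have "elliptic2 ?p"
    by (simp add: elliptic2_def SL2_def det_mk trace_mk)
  moreover have "gamma ?f ?p = z"
  proof -
    have i1: "matrix_inv ?f = mk 1 (-1) 0 1" by (simp add: inv_mk)
    have i2: "matrix_inv ?p = mk (-\<i>) 0 (-s) \<i>" using inv_mk[of \<i> "-\<i>" 0 s] by simp
    have gen: "\<And>I::complex. I * I = -1 \<Longrightarrow> ((1 * I + 1 * s) * 1 + (1 * 0 + 1 * - I) * 0) * - I +
     ((1 * I + 1 * s) * - 1 + (1 * 0 + 1 * - I) * 1) * - s +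
     (((0 * I + 1 * s) * 1 + (0 * 0 + 1 * - I) * 0) * 0 +
      ((0 * I + 1 * s) * - 1 + (0 * 0 + 1 * - I) * 1) * I) - 2 = z"
      using s2 by algebra
    show ?thesis unfolding gamma_def i1 i2 mult_mk trace_mk by (rule gen) simp
  qed
  ultimately show ?thesis by blast
qed

lemma word_poly_mid: "word_poly (0 # mid xs @ [0]) = Pw xs"
  unfolding word_poly_def
proof (rule the_equality)
  show "\<forall>f phi. parabolic f \<and> elliptic2 phi \<longrightarrow>
      gamma f (word_eval f phi (0 # mid xs @ [0])) = poly (Pw xs) (gamma f phi)"
    using inv_main by blast
next
  fix p
  assume h: "\<forall>f phi. parabolic f \<and> elliptic2 phi \<longrightarrow>
      gamma f (word_eval f phi (0 # mid xs @ [0])) = poly p (gamma f phi)"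
  have "poly p = poly (Pw xs)"
  proof
    fix z
    obtain f phi where fp: "parabolic f" "elliptic2 phi" "gamma f phi = z" using witness by blast
    show "poly p z = poly (Pw xs) z" using h inv_main[OF fp(1,2)] fp by metis
  qed
  then show "p = Pw xs" by (simp add: poly_eq_poly_eq_iff)
qed

lemma set_mid: "set (mid xs) \<subseteq> set xs \<union> uminus ` set xs"
  by (induction xs) auto

lemma mid_ne: "xs \<noteq> [] \<Longrightarrow> mid xs \<noteq> []"
  by (cases xs) auto

lemma good_mid:
  assumes "xs \<noteq> []" "0 \<notin> set xs"
  shows "good_word (0 # mid xs @ [0])"
proof -
  have z: "0 \<notin> set (mid xs)" using set_mid[of xs] assms(2) by force
  have ne: "mid xs \<noteq> []" using mid_ne assms(1) by blast
  then have "3 \<le> length (0 # mid xs @ [0])" by (cases "mid xs") auto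
  moreover have "(0 # mid xs @ [0]) ! i \<noteq> 0" if "1 \<le> i" "i < length (0 # mid xs @ [0]) - 1" for i
  proof -
    have "(0 # mid xs @ [0]) ! i = mid xs ! (i - 1)" using that
      by (cases i) (auto simp: nth_append)
    moreover have "i - 1 < length (mid xs)" using that by auto
    ultimately show ?thesis using z nth_mem by metis
  qed
  ultimately show ?thesis unfolding good_word_def by blast
qed

lemma Pw_in: "xs \<noteq> [] \<Longrightarrow> 0 \<notin> set xs \<Longrightarrow> poly (Pw xs) \<in> word_semigroup"
proof -
  assume a: "xs \<noteq> []" "0 \<notin> set xs"
  have "poly (Pw xs) = poly (word_poly (0 # mid xs @ [0]))" by (simp only: word_poly_mid)
  then show ?thesis unfolding word_semigroup_def using good_mid[OF a] by blast
qed

lemma Pw_hom: "poly (Pw xs) (t * z) = t ^ (2 ^ length xs) * poly (Pw xs) z"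
proof (induction xs)
  case Nil then show ?case by simp
next
  case (Cons x xs)
  have "t ^ (2 ^ length (x # xs)) = t ^ (2 ^ length xs * 2)" by (simp add: mult.commute)
  also have "\<dots> = (t ^ (2 ^ length xs))^2" by (rule power_mult)
  finally have e: "t ^ (2 ^ length (x # xs)) = (t ^ (2 ^ length xs))^2" .
  show ?case unfolding poly_Pw_Cons Cons e power_mult_distrib by (simp only: mult_ac)
qed



lemma not_normal:
  assumes g: "\<And>n. g n \<in> F" and ab: "a \<in> V" "b \<in> V" and bd: "\<And>n. norm (g n a) \<le> B"
    and lim: "filterlim (\<lambda>n. norm (g n b)) at_top sequentially"
  shows "\<not> normal_family F V"
proof
  assume "normal_family F V"
  then obtain r where r: "strict_mono r" and
    disj: "(\<exists>h. \<forall>K. compact K \<and> K \<subseteq> V \<longrightarrow> uniform_limit K (\<lambda>n. g (r n)) h sequentially) \<or>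
         (\<forall>K. compact K \<and> K \<subseteq> V \<longrightarrow>
            (\<forall>M::real. eventually (\<lambda>n. \<forall>z\<in>K. M \<le> norm (g (r n) z)) sequentially))"
    using g unfolding normal_family_def by blast
  have lim2: "filterlim (\<lambda>n. norm (g (r n) b)) at_top sequentially"
    using filterlim_compose[OF lim filterlim_subseq[OF r]] by (simp add: o_def)
  from disj show False
  proof
    assume "\<exists>h. \<forall>K. compact K \<and> K \<subseteq> V \<longrightarrow> uniform_limit K (\<lambda>n. g (r n)) h sequentially"
    then obtain h where hK: "\<forall>K. compact K \<and> K \<subseteq> V \<longrightarrow> uniform_limit K (\<lambda>n. g (r n)) h sequentially" by blast
    then have "uniform_limit {b} (\<lambda>n. g (r n)) h sequentially" using ab
      by (metis compact_sing empty_subsetI insert_subset)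
    then have t: "((\<lambda>n. g (r n) b) \<longlongrightarrow> h b) sequentially"
      by (rule tendsto_uniform_limitI) simp
    have e1: "eventually (\<lambda>n. dist (g (r n) b) (h b) < 1) sequentially"
      using tendstoD[OF t] by simp
    have e2: "eventually (\<lambda>n. norm (h b) + 1 \<le> norm (g (r n) b)) sequentially"
      using lim2 by (simp add: filterlim_at_top)
    have "eventually (\<lambda>n. dist (g (r n) b) (h b) < 1 \<and> norm (h b) + 1 \<le> norm (g (r n) b)) sequentially"
      by (rule eventually_conj[OF e1 e2])
    then obtain N where N: "\<forall>n\<ge>N. dist (g (r n) b) (h b) < 1 \<and> norm (h b) + 1 \<le> norm (g (r n) b)"
      unfolding eventually_sequentially by blast
    then have N1: "dist (g (r N) b) (h b) < 1" "norm (h b) + 1 \<le> norm (g (r N) b)" by auto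
    have "norm (g (r N) b) - norm (h b) \<le> dist (g (r N) b) (h b)"
      using norm_triangle_ineq2[of "g (r N) b" "h b"] by (simp add: dist_norm)
    then show False using N1 by linarith
  next
    assume "\<forall>K. compact K \<and> K \<subseteq> V \<longrightarrow>
            (\<forall>M::real. eventually (\<lambda>n. \<forall>z\<in>K. M \<le> norm (g (r n) z)) sequentially)"
    note hK = this
    have "compact {a}" "{a} \<subseteq> V" using ab by auto
    then have "eventually (\<lambda>n. \<forall>z\<in>{a}. B + 1 \<le> norm (g (r n) z)) sequentially"
      using hK by blast
    then obtain N where "\<forall>n\<ge>N. \<forall>z\<in>{a}. B + 1 \<le> norm (g (r n) z)"
      unfolding eventually_sequentially by blast
    then have "B + 1 \<le> norm (g (r N) a)" by auto
    then show False using bd[of "r N"] by simp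
  qed
qed

lemma lin_at_top:
  assumes "c > 0" "\<And>n. c * real n \<le> u n"
  shows "filterlim u at_top sequentially"
proof (rule filterlim_at_top_mono)
  show "filterlim (\<lambda>n. c * real n) at_top sequentially"
    using assms(1) by (intro filterlim_tendsto_pos_mult_at_top filterlim_real_sequentially) auto
  show "eventually (\<lambda>n. c * real n \<le> u n) sequentially" using assms(2) by simp
qed

definition X :: "complex \<Rightarrow> int" where "X z = \<lceil>1 / (4 * norm z)\<rceil>"

fun sx :: "complex \<Rightarrow> nat \<Rightarrow> int list" where
  "sx z0 0 = []"
| "sx z0 (Suc k) = X (poly (Pw (sx z0 k)) z0) # sx z0 k"

lemma X_step:
  assumes "0 < norm z" "norm z \<le> 1/4"
  shows "1 \<le> X z" "1/16 \<le> norm (of_int (X z) ^ 2 * z^2)" "norm (of_int (X z) ^ 2 * z^2) \<le> 1/4"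
proof -
  let ?r = "norm z"
  have a: "1 \<le> 1 / (4 * ?r)" using assms by (simp add: field_simps)
  then show "1 \<le> X z" unfolding X_def by linarith
  have lo: "1 / (4 * ?r) \<le> real_of_int (X z)" unfolding X_def by linarith
  have hi: "real_of_int (X z) < 1 / (4 * ?r) + 1" unfolding X_def by linarith
  have n: "norm (of_int (X z) ^ 2 * z^2) = (real_of_int (X z) * ?r)^2"
    by (simp add: norm_mult norm_power power_mult_distrib)
  have l1: "1/4 \<le> real_of_int (X z) * ?r" using lo assms(1) by (simp add: field_simps)
  have h1: "real_of_int (X z) * ?r \<le> 1/2" using hi assms by (simp add: field_simps)
  have "(1/4::real)^2 \<le> (real_of_int (X z) * ?r)^2" using l1 by (intro power_mono) auto
  then show "1/16 \<le> norm (of_int (X z) ^ 2 * z^2)" unfolding n by (simp add: power_divide)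
  have "(real_of_int (X z) * ?r)^2 \<le> (1/2)^2" using h1 l1 by (intro power_mono) auto
  then show "norm (of_int (X z) ^ 2 * z^2) \<le> 1/4" unfolding n by (simp add: power_divide)
qed

lemma sx_props:
  assumes "0 < norm z0" "norm z0 \<le> 1/4"
  shows "0 < norm (poly (Pw (sx z0 k)) z0) \<and> norm (poly (Pw (sx z0 k)) z0) \<le> 1/4
         \<and> (k \<ge> 1 \<longrightarrow> 1/16 \<le> norm (poly (Pw (sx z0 k)) z0)) \<and> 0 \<notin> set (sx z0 k) \<and> length (sx z0 k) = k"
proof (induction k)
  case 0 then show ?case using assms by simp
next
  case (Suc k)
  let ?z = "poly (Pw (sx z0 k)) z0"
  have p: "poly (Pw (sx z0 (Suc k))) z0 = of_int (X ?z) ^ 2 * ?z^2" by simp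
  have "0 < norm ?z" "norm ?z \<le> 1/4" using Suc by auto
  note st = X_step[OF this]
  show ?case unfolding p using st Suc by auto
qed


theorem corollary3:
  shows "\<exists>U. open U \<and> 0 \<in> U \<and> U \<subseteq> julia_set word_semigroup"
proof (intro exI conjI)
  show "open (ball (0::complex) (1/4))" by simp
  show "(0::complex) \<in> ball 0 (1/4)" by simp
  show "ball 0 (1/4) \<subseteq> julia_set word_semigroup"
  proof
    fix z0 :: complex assume z0: "z0 \<in> ball 0 (1/4)"
    have "\<not> normal_family word_semigroup V" if V: "open V" "z0 \<in> V" for V
    proof -
      obtain \<delta> where d: "\<delta> > 0" "ball z0 \<delta> \<subseteq> V" using V open_contains_ball by blast
      show ?thesis
      proof (cases "z0 = 0")
        case True
        let ?g = "\<lambda>n::nat. poly (Pw [int n + 1])"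
        let ?b = "complex_of_real (\<delta>/2)"
        show ?thesis
        proof (rule not_normal[of ?g _ z0 V ?b 0])
          show "?g n \<in> word_semigroup" for n by (rule Pw_in) auto
          show "z0 \<in> V" by fact
          show "?b \<in> V" using d True by (auto simp: dist_norm)
          show "norm (?g n z0) \<le> 0" for n using True by simp
          show "filterlim (\<lambda>n. norm (?g n ?b)) at_top sequentially"
          proof (rule lin_at_top)
            show "(\<delta>/2)^2 > 0" using d by simp
            show "(\<delta>/2)^2 * real n \<le> norm (?g n ?b)" for n
            proof -
              have c: "cmod (complex_of_nat n + 1) = real n + 1"
                by (metis add.commute norm_of_nat of_nat_Suc)
              have "norm (?g n ?b) = (real n + 1)^2 * (\<delta>/2)^2" using d
                by (simp add: norm_mult norm_power c)
              moreover have "real n \<le> (real n + 1)^2"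
                using mult_nonneg_nonneg[of "real n" "real n"] by (simp add: power2_eq_square algebra_simps)
              ultimately show ?thesis using d by (simp add: mult.commute)
            qed
          qed
        qed
      next
        case False
        then have z0p: "0 < norm z0" "norm z0 \<le> 1/4" using z0 by auto
        define t where "t = 1 + \<delta> / (2 * norm z0)"
        have t1: "t > 1" unfolding t_def using d z0p by simp
        let ?g = "\<lambda>n::nat. poly (Pw (sx z0 (Suc n)))"
        let ?b = "complex_of_real t * z0"
        note P = sx_props[OF z0p]
        show ?thesis
        proof (rule not_normal[of ?g _ z0 V ?b "1/4"])
          show "?g n \<in> word_semigroup" for n
            using P[of "Suc n"] by (intro Pw_in) auto
          show "z0 \<in> V" by fact
          have eq: "?b - z0 = complex_of_real (t - 1) * z0" by (simp add: algebra_simps)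
          have "dist ?b z0 = norm (complex_of_real (t - 1) * z0)" by (simp only: dist_norm eq)
          also have "\<dots> = (t - 1) * norm z0" using t1 by (metis abs_of_pos diff_gt_0_iff_gt norm_mult norm_of_real)
          also have "\<dots> = \<delta>/2" unfolding t_def using z0p by simp
          finally have db: "dist ?b z0 = \<delta>/2" .
          have "?b \<in> ball z0 \<delta>" using db d(1) by (simp add: dist_commute)
          then show "?b \<in> V" using d(2) by blast
          show "norm (?g n z0) \<le> 1/4" for n using P[of "Suc n"] by simp
          show "filterlim (\<lambda>n. norm (?g n ?b)) at_top sequentially"
          proof (rule lin_at_top)
            show "(t - 1)/16 > 0" using t1 by simp
            show "(t - 1)/16 * real n \<le> norm (?g n ?b)" for n
            proof -
              have len: "length (sx z0 (Suc n)) = Suc n" using P[of "Suc n"] by blast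
              have hm: "?g n ?b = complex_of_real t ^ (2 ^ Suc n) * ?g n z0"
                using Pw_hom[of "sx z0 (Suc n)" "complex_of_real t" z0] unfolding len .
              have Nm: "norm (?g n ?b) = t ^ (2 ^ Suc n) * norm (?g n z0)"
                unfolding hm using t1 by (simp only: norm_mult norm_power norm_of_real abs_of_pos[OF order.strict_trans[OF zero_less_one t1]])
              have G: "1/16 \<le> norm (?g n z0)" using P[of "Suc n"] by simp
              have B: "1 + real n * (t - 1) \<le> t ^ n"
                using Bernoulli_inequality[of "t - 1" n] t1 by simp
              have pw: "t ^ n \<le> t ^ (2 ^ Suc n)"
              proof (rule power_increasing)
                show "n \<le> 2 ^ Suc n" using less_exp[of n] by (simp only: power_Suc)
                show "1 \<le> t" using t1 by simp
              qed
              have B': "real n * (t - 1) \<le> t ^ (2 ^ Suc n)" using B pw by linarith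
              have e: "(t - 1)/16 * real n = (real n * (t - 1))/16" by simp
              have T: "(t - 1)/16 * real n \<le> t ^ (2 ^ Suc n) / 16"
                unfolding e using B' by linarith
              have T0: "0 \<le> t ^ (2 ^ Suc n)" using t1 by simp
              have "t ^ (2 ^ Suc n) / 16 \<le> t ^ (2 ^ Suc n) * norm (?g n z0)"
                using mult_left_mono[OF G T0] by simp
              then show ?thesis using T Nm by linarith
            qed
          qed
        qed
      qed
    qed
    then show "z0 \<in> julia_set word_semigroup"
      unfolding julia_set_def fatou_set_def by blast
  qed
qed


end
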